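(* Let $k\in\mathbb{N}_0$. Then: (a) the set of $v\in\widetilde V$ with $\rho_k(v)=k+4$ is exactly $\{\langle1\rangle^{k+4},\ \langle2\rangle^{k+3},\ (\langle3\rangle^{k+2},1),\ (\langle5\rangle^{k+1},2,1)\}$; (b) the set of minimal elements of $\{v\in\widetilde V:\rho_k(v)>k+4\}$ is exactly $\{\langle1\rangle^{k+5},\ (2,\langle1\rangle^{k+3}),\ (3,\langle2\rangle^{k+2}),\ (4,\langle3\rangle^{k+1},1),\ (6,\langle5\rangle^{k},2,1)\}$; (c) consequently, for every $w\in\widetilde V$ with $\rho_k(w)>k+4$ there exists $v\in\widetilde V$ with $v<w$ and $\rho_k(v)=k+4$.
   Context: For $k\in\mathbb{N}_0$ put $t=k+2$, $u_0=0$, $u_1=1$, $u_{i+2}=tu_{i+1}-u_i$; $\rho_k(0)=0$ and $\rho_k(n)=1+\frac{u_{n-1}}{u_n+1}$ for $n\in\mathbb{N}$. $\widetilde V$ is the set of infinite nonincreasing sequences of nonnegative integers that are eventually $0$ (written by listing nonzero entries), with componentwise order $\le$; $v<w$ means $v\le w$, $v\ne w$. $\rho_k(v)=\sum_i\rho_k(v_i)$. $\langle s\rangle^r$ denotes $s$ repeated $r$ times (omitted if $r=0$). *)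

theory Defs
  imports Complex_Main
begin

fun useq :: "nat \<Rightarrow> nat \<Rightarrow> int" where
  "useq k 0 = 0"
| "useq k (Suc 0) = 1"
| "useq k (Suc (Suc i)) = (int k + 2) * useq k (Suc i) - useq k i"

definition rho :: "nat \<Rightarrow> nat \<Rightarrow> real" where
  "rho k n = (if n = 0 then 0
              else 1 + real_of_int (useq k (n - 1)) / real_of_int (useq k n + 1))"

text \<open>The set V-tilde: nonincreasing sequences of naturals that are eventually 0.
  Ordered componentwise via the pointwise order on functions (le_fun).\<close>
definition Vt :: "(nat \<Rightarrow> nat) set" where
  "Vt = {v. (\<forall>i j. i \<le> j \<longrightarrow> v j \<le> v i) \<and> (\<exists>N. \<forall>i\<ge>N. v i = 0)}"

definition rhoV :: "nat \<Rightarrow> (nat \<Rightarrow> nat) \<Rightarrow> real" where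
  "rhoV k v = (\<Sum>i\<in>{i. v i \<noteq> 0}. rho k (v i))"

definition seq :: "nat list \<Rightarrow> nat \<Rightarrow> nat" where
  "seq xs i = (if i < length xs then xs ! i else 0)"

definition minimal_elements :: "(nat \<Rightarrow> nat) set \<Rightarrow> (nat \<Rightarrow> nat) set" where
  "minimal_elements S = {v \<in> S. \<not> (\<exists>w\<in>S. w < v)}"

end

theory Submission
  imports Defs
begin

lemma u_basic: "useq k n \<ge> 0 \<and> useq k (Suc n) \<ge> useq k n + 1"
proof (induction n)
  case 0 then show ?case by simp
next
  case (Suc n)
  have h0: "useq k (Suc n) \<ge> 0" using Suc by linarith
  have h: "int k * useq k (Suc n) \<ge> 0" using h0 by simp
  have e: "useq k (Suc (Suc n)) = int k * useq k (Suc n) + 2 * useq k (Suc n) - useq k n"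
    by (simp add: algebra_simps)
  show ?case using Suc h h0 e by linarith
qed

lemma u_nonneg: "useq k n \<ge> 0" using u_basic by blast
lemma u_step: "useq k (Suc n) \<ge> useq k n + 1" using u_basic by blast

lemma u_cassini: "useq k (Suc n)^2 - useq k n * useq k (Suc (Suc n)) = 1"
proof (induction n)
  case 0 then show ?case by (simp add: power2_eq_square)
next
  case (Suc n)
  then show ?case by (simp add: power2_eq_square algebra_simps)
qed

definition cA :: "nat \<Rightarrow> int" where "cA k = int k^2 + 3*int k + 1"
definition cD :: "nat \<Rightarrow> int" where "cD k = int k^3 + 5*int k^2 + 6*int k + 1"

lemma cD_pos: "cD k > 0" unfolding cD_def by (simp add: add_pos_nonneg)
lemma cA_pos: "cA k > 0" unfolding cA_def by (simp add: add_pos_nonneg)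

lemma u_cbound: "cD k * useq k n \<le> cA k * useq k (Suc n)"
proof (induction n)
  case 0 then show ?case using cA_pos[of k] by simp
next
  case (Suc n)
  let ?u0 = "useq k n" and ?u1 = "useq k (Suc n)"
  have e: "useq k (Suc (Suc n)) = (int k + 2) * ?u1 - ?u0" by simp
  have id: "cD k * (cA k * useq k (Suc (Suc n)) - cD k * ?u1) = int k * ?u1 + cA k * (cA k * ?u1 - cD k * ?u0)"
    unfolding e cA_def cD_def by (simp add: algebra_simps power2_eq_square power3_eq_cube)
  have "int k * ?u1 + cA k * (cA k * ?u1 - cD k * ?u0) \<ge> 0"
    using Suc cA_pos[of k] u_nonneg[of k "Suc n"] by simp
  then have "cD k * (cA k * useq k (Suc (Suc n)) - cD k * ?u1) \<ge> 0" using id by simp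
  then have "cA k * useq k (Suc (Suc n)) - cD k * ?u1 \<ge> 0" using cD_pos[of k]
    by (simp add: zero_le_mult_iff)
  then show ?case by simp
qed


definition g :: "nat \<Rightarrow> nat \<Rightarrow> real" where "g k n = rho k n - 1"
definition cc :: "nat \<Rightarrow> real" where "cc k = real_of_int (cA k) / real_of_int (cD k)"

lemma cc_pos: "cc k > 0" using cA_pos cD_pos unfolding cc_def by simp

lemma g_Suc: "g k (Suc n) = real_of_int (useq k n) / real_of_int (useq k (Suc n) + 1)"
  unfolding g_def rho_def by simp

lemma g_lt_c: "g k n < cc k"
proof (cases n)
  case 0 then show ?thesis using cc_pos[of k] by (simp add: g_def rho_def)
next
  case (Suc m)
  have p: "real_of_int (useq k (Suc m) + 1) > 0" using u_nonneg[of k "Suc m"] by simp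
  have "cD k * useq k m < cA k * (useq k (Suc m) + 1)"
    using u_cbound[of k m] cA_pos[of k] by (simp add: algebra_simps)
  then have "real_of_int (cD k) * real_of_int (useq k m) < real_of_int (cA k) * real_of_int (useq k (Suc m) + 1)"
    by (metis of_int_less_iff of_int_mult)
  then show ?thesis unfolding Suc g_Suc cc_def using p cD_pos[of k]
    by (simp add: divide_simps mult.commute)
qed

lemma cA_real: "real_of_int (cA k) = real k ^ 2 + 3 * real k + 1" by (simp add: cA_def)
lemma cD_real: "real_of_int (cD k) = real k ^ 3 + 5 * real k ^ 2 + 6 * real k + 1" by (simp add: cD_def)

lemma g_step: "g k (Suc n) < g k (Suc (Suc n))"
proof -
  have cas: "useq k (Suc n)^2 - useq k n * useq k (Suc (Suc n)) = 1" by (rule u_cassini)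
  have st: "useq k (Suc n) \<ge> useq k n + 1" by (rule u_step)
  have "useq k n * (useq k (Suc (Suc n)) + 1) < useq k (Suc n) * (useq k (Suc n) + 1)"
    using cas st by (simp add: algebra_simps power2_eq_square del: useq.simps)
  then have i: "real_of_int (useq k n) * real_of_int (useq k (Suc (Suc n)) + 1) < real_of_int (useq k (Suc n)) * real_of_int (useq k (Suc n) + 1)"
    by (metis of_int_less_iff of_int_mult)
  have p1: "real_of_int (useq k (Suc n) + 1) > 0" using u_nonneg[of k "Suc n"] by simp
  have p2: "real_of_int (useq k (Suc (Suc n)) + 1) > 0" using u_nonneg[of k "Suc (Suc n)"] by (simp del: useq.simps)
  show ?thesis unfolding g_Suc using i p1 p2 by (simp add: divide_simps del: useq.simps)
qed

lemma g_mono: "1 \<le> a \<Longrightarrow> a < b \<Longrightarrow> g k a < g k b"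
proof (induction b)
  case 0 then show ?case by simp
next
  case (Suc b)
  obtain b' where b: "b = Suc b'" using Suc by (cases b) auto
  have s: "g k b < g k (Suc b)" unfolding b by (rule g_step)
  show ?case
  proof (cases "a = b")
    case True then show ?thesis using s by simp
  next
    case False then have "a < b" using Suc by simp
    then show ?thesis using Suc s by auto
  qed
qed

lemma g_mono_le: "1 \<le> a \<Longrightarrow> a \<le> b \<Longrightarrow> g k a \<le> g k b"
  using g_mono[of a b k] by (cases "a = b") auto

lemma g1: "g k 1 = 0" unfolding g_def rho_def by simp
lemma g_nonneg: "1 \<le> a \<Longrightarrow> g k a \<ge> 0" using g_mono_le[of 1 a k] g1 by simp

lemma u2: "useq k 2 = int k + 2" by (simp add: numeral_2_eq_2)
lemma u3: "useq k 3 = int k ^ 2 + 4 * int k + 3" by (simp add: numeral_3_eq_3 power2_eq_square algebra_simps)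
lemma u4: "useq k 4 = int k ^ 3 + 6 * int k ^ 2 + 10 * int k + 4"
proof -
  have "useq k 4 = (int k + 2) * useq k 3 - useq k 2" by (simp add: eval_nat_numeral)
  then show ?thesis unfolding u2 u3 by (simp add: algebra_simps power2_eq_square power3_eq_cube)
qed
lemma u5: "useq k 5 = int k ^ 4 + 8 * int k ^ 3 + 21 * int k ^ 2 + 20 * int k + 5"
proof -
  have "useq k 5 = (int k + 2) * useq k 4 - useq k 3" by (simp add: eval_nat_numeral)
  then show ?thesis unfolding u4 u3
    by (simp add: algebra_simps power2_eq_square power3_eq_cube power4_eq_xxxx)
qed

lemma fe: "(b::real) > 0 \<Longrightarrow> d > 0 \<Longrightarrow> a * d = c * b \<Longrightarrow> a / b = c / d"
  by (simp add: field_simps)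

lemma g2: "g k 2 = 1 / (real k + 3)"
  unfolding g_def rho_def by (simp add: numeral_2_eq_2 field_simps)
lemma g3: "g k 3 = 1 / (real k + 2)"
proof -
  have "g k 3 = real_of_int (useq k 2) / real_of_int (useq k 3 + 1)" unfolding g_def rho_def by simp
  also have "... = 1 / (real k + 2)" unfolding u2 u3 
    by (rule fe) (simp_all add: add_pos_nonneg algebra_simps power2_eq_square)
  finally show ?thesis .
qed
lemma g4: "g k 4 = (real k + 3) / (real k ^ 2 + 5 * real k + 5)"
proof -
  have "g k 4 = real_of_int (useq k 3) / real_of_int (useq k 4 + 1)" unfolding g_def rho_def by simp
  also have "... = (real k + 3) / (real k ^ 2 + 5 * real k + 5)" unfolding u4 u3
    by (rule fe) (simp_all add: add_pos_nonneg algebra_simps power2_eq_square power3_eq_cube)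
  finally show ?thesis .
qed
lemma g5: "g k 5 = (real k + 2) / ((real k + 1) * (real k + 3))"
proof -
  have "g k 5 = real_of_int (useq k 4) / real_of_int (useq k 5 + 1)" unfolding g_def rho_def by simp
  also have "... = (real k + 2) / ((real k + 1) * (real k + 3))" unfolding u5 u4
    by (rule fe) (simp_all add: add_pos_nonneg algebra_simps power2_eq_square power3_eq_cube power4_eq_xxxx)
  finally show ?thesis .
qed

lemma aux3: assumes "a * P = n1" "b * P = n2" "c * P = n3" "P = n1 + n2 + n3 + 1" "P > (0::real)"
  shows "a + b + c < 1"
proof -
  have "(a + b + c) * P = a * P + b * P + c * P" by (simp only: distrib_right)
  then have "(a + b + c) * P = n1 + n2 + n3" using assms(1-3) by linarith
  then have "(a + b + c) * P < 1 * P" using assms(4) by linarith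
  then show ?thesis using assms(5) mult_right_less_imp_less by fastforce
qed

lemma m1: "(d::real) \<noteq> 0 \<Longrightarrow> x * (a / d) * (d * q * r) = x * a * q * r" by simp
lemma m2: "(q::real) \<noteq> 0 \<Longrightarrow> r / q * (d * q * r) = r^2 * d" by (simp add: power2_eq_square)
lemma m3: "(r::real) \<noteq> 0 \<Longrightarrow> 1 / r * (d * q * r) = d * q" by simp

lemma N4: "real k * cc k + g k 4 + g k 2 < 1"
proof -
  let ?x = "real k"
  let ?A = "?x ^ 2 + 3 * ?x + 1" and ?D = "?x ^ 3 + 5 * ?x ^ 2 + 6 * ?x + 1" and ?Q = "?x ^ 2 + 5 * ?x + 5"
  have h: "0 \<le> ?x^3" "0 \<le> ?x^2" "0 \<le> ?x" by simp_all
  have pD: "?D > 0" and pQ: "?Q > 0" and p3: "?x + 3 > 0" using h by linarith+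
  have id: "?x * ?A * ?Q * (?x + 3) + (?x + 3)^2 * ?D + ?D * ?Q + 1 = ?D * ?Q * (?x + 3)"
    by (simp add: algebra_simps power2_eq_square power3_eq_cube)
  have e1: "?x * (?A / ?D) * (?D * ?Q * (?x + 3)) = ?x * ?A * ?Q * (?x + 3)" using pD by (intro m1) simp
  have e2: "(?x + 3) / ?Q * (?D * ?Q * (?x + 3)) = (?x + 3)^2 * ?D" using pQ by (intro m2) simp
  have e3: "1 / (?x + 3) * (?D * ?Q * (?x + 3)) = ?D * ?Q" using p3 by (intro m3) simp
  have pDen: "?D * ?Q * (?x + 3) > 0" using pD pQ p3 by (intro mult_pos_pos)
  have "?x * (?A / ?D) + (?x + 3) / ?Q + 1 / (?x + 3) < 1"
    by (rule aux3[OF e1 e2 e3 id[symmetric] pDen])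
  then show ?thesis unfolding g4 g2 cc_def cA_real cD_real .
qed

lemma N5: "(real k + 1) * cc k \<le> 1"
proof -
  let ?x = "real k"
  have h: "0 \<le> ?x^3" "0 \<le> ?x^2" "0 \<le> ?x" by simp_all
  have pD: "?x ^ 3 + 5 * ?x ^ 2 + 6 * ?x + 1 > 0" using h by linarith
  have "(?x + 1) * (?x ^ 2 + 3 * ?x + 1) \<le> ?x ^ 3 + 5 * ?x ^ 2 + 6 * ?x + 1"
    by (simp add: algebra_simps power2_eq_square power3_eq_cube)
  then show ?thesis unfolding cc_def cA_real cD_real using pD by (simp add: divide_simps)
qed


lemma rho_g: "rho k n = g k n + 1" by (simp add: g_def)

lemma rhoV_m:
  assumes "\<forall>i<m. v i \<noteq> 0" "\<forall>i\<ge>m. v i = 0"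
  shows "rhoV k v = real m + (\<Sum>i<m. g k (v i))"
proof -
  have "{i. v i \<noteq> 0} = {..<m}" using assms by (auto simp: not_less[symmetric])
  then have "rhoV k v = (\<Sum>i<m. g k (v i) + 1)" unfolding rhoV_def rho_g by simp
  also have "... = real m + (\<Sum>i<m. g k (v i))" by (simp add: sum.distrib)
  finally show ?thesis .
qed

lemma Vt_m:
  assumes "v \<in> Vt"
  obtains m where "\<forall>i<m. v i \<noteq> 0" "\<forall>i\<ge>m. v i = 0"
proof -
  from assms obtain N where N: "\<forall>i\<ge>N. v i = 0" and M: "\<forall>i j. i \<le> j \<longrightarrow> v j \<le> v i"
    unfolding Vt_def by blast
  define m where "m = (LEAST i. v i = 0)"
  have vm: "v m = 0" unfolding m_def using N by (metis (mono_tags) LeastI order_refl)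
  have "\<forall>i<m. v i \<noteq> 0" unfolding m_def using not_less_Least by blast
  moreover have "\<forall>i\<ge>m. v i = 0" using M vm by (metis le_zero_eq)
  ultimately show ?thesis using that by blast
qed

lemma sum_lb:
  assumes "\<forall>i<n. a \<le> v i" "1 \<le> a"
  shows "real n * g k a \<le> (\<Sum>i<n. g k (v i))"
proof -
  have "(\<Sum>i<n. g k a) \<le> (\<Sum>i<n. g k (v i))"
    using assms by (intro sum_mono) (simp add: g_mono_le)
  then show ?thesis by simp
qed

lemma sum_lb_strict:
  assumes "\<forall>i<n. a \<le> v i" "1 \<le> a" "0 < n" "a < v 0"
  shows "real n * g k a < (\<Sum>i<n. g k (v i))"
proof -
  have "(\<Sum>i<n. g k a) < (\<Sum>i<n. g k (v i))"
  proof (rule sum_strict_mono_ex1)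
    show "\<forall>x\<in>{..<n}. g k a \<le> g k (v x)" using assms by (simp add: g_mono_le)
    show "\<exists>x\<in>{..<n}. g k a < g k (v x)" using assms by (intro bexI[of _ 0]) (simp_all add: g_mono)
  qed simp
  then show ?thesis by simp
qed

lemma sum_ub: "(\<Sum>i<n. g k (v i)) \<le> real n * cc k"
proof -
  have "(\<Sum>i<n. g k (v i)) \<le> (\<Sum>i<n. cc k)" by (intro sum_mono) (simp add: less_imp_le g_lt_c)
  then show ?thesis by simp
qed

lemma sum_ub_strict: "0 < n \<Longrightarrow> (\<Sum>i<n. g k (v i)) < real n * cc k"
proof -
  assume "0 < n"
  then have "(\<Sum>i<n. g k (v i)) < (\<Sum>i<n. cc k)" by (intro sum_strict_mono) (auto simp: g_lt_c)
  then show ?thesis by simp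
qed

lemma sum_split: "(\<Sum>i<Suc n. g k (v i)) = (\<Sum>i<n. g k (v i)) + g k (v n)" by simp


lemma sA1: "seq (replicate (k + 4) 1) i = (if i < k + 4 then 1 else 0)"
  by (simp add: seq_def)
lemma sA2: "seq (replicate (k + 3) 2) i = (if i < k + 3 then 2 else 0)"
  by (simp add: seq_def)
lemma sA3: "seq (replicate (k + 2) 3 @ [1]) i = (if i < k + 2 then 3 else if i = k + 2 then 1 else 0)"
  by (auto simp: seq_def nth_append simp del: replicate.simps)
lemma sA4: "seq (replicate (k + 1) 5 @ [2, 1]) i =
   (if i < k + 1 then 5 else if i = k + 1 then 2 else if i = k + 2 then 1 else 0)"
  by (auto simp: seq_def nth_append nth_Cons')
lemma sM1: "seq (replicate (k + 5) 1) i = (if i < k + 5 then 1 else 0)"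
  by (simp add: seq_def)
lemma sM2: "seq (2 # replicate (k + 3) 1) i = (if i = 0 then 2 else if i < k + 4 then 1 else 0)"
  by (auto simp: seq_def nth_Cons')
lemma sM3: "seq (3 # replicate (k + 2) 2) i = (if i = 0 then 3 else if i < k + 3 then 2 else 0)"
  by (auto simp: seq_def nth_Cons')
lemma sM4: "seq (4 # replicate (k + 1) 3 @ [1]) i =
   (if i = 0 then 4 else if i < k + 2 then 3 else if i = k + 2 then 1 else 0)"
  by (auto simp: seq_def nth_Cons' nth_append)
lemma sM5: "seq (6 # replicate k 5 @ [2, 1]) i =
   (if i = 0 then 6 else if i < k + 1 then 5 else if i = k + 1 then 2 else if i = k + 2 then 1 else 0)"
  by (auto simp: seq_def nth_Cons' nth_append)

lemmas sforms = sA1 sA2 sA3 sA4 sM1 sM2 sM3 sM4 sM5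

lemma rhoV_seq: "0 \<notin> set xs \<Longrightarrow> rhoV k (seq xs) = sum_list (map (rho k) xs)"
proof -
  assume h: "0 \<notin> set xs"
  have "{i. seq xs i \<noteq> 0} = {..<length xs}" using h
    by (auto simp: seq_def) (metis gr0I nth_mem)
  then have "rhoV k (seq xs) = (\<Sum>i<length xs. rho k (xs ! i))" unfolding rhoV_def
    by (simp add: seq_def)
  also have "... = sum_list (map (rho k) xs)"
    by (simp add: sum_list_sum_nth atLeast0LessThan)
  finally show ?thesis .
qed

lemma VtI: "(\<forall>i j. i \<le> j \<longrightarrow> f j \<le> f i) \<Longrightarrow> (\<forall>i\<ge>N. f i = 0) \<Longrightarrow> f \<in> Vt"
  unfolding Vt_def by blast

lemma inVt:
  "seq (replicate (k + 4) 1) \<in> Vt" "seq (replicate (k + 3) 2) \<in> Vt"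
  "seq (replicate (k + 2) 3 @ [1]) \<in> Vt" "seq (replicate (k + 1) 5 @ [2, 1]) \<in> Vt"
  "seq (replicate (k + 5) 1) \<in> Vt" "seq (2 # replicate (k + 3) 1) \<in> Vt"
  "seq (3 # replicate (k + 2) 2) \<in> Vt" "seq (4 # replicate (k + 1) 3 @ [1]) \<in> Vt"
  "seq (6 # replicate k 5 @ [2, 1]) \<in> Vt"
  by (rule VtI[where N="k+5"]; simp only: sforms; auto)+


lemma g1': "g k (Suc 0) = 0" using g1 by simp
lemma N1: "(real k + 3) * g k 2 = 1" unfolding g2 by simp
lemma N2: "(real k + 2) * g k 3 = 1" unfolding g3 by simp
lemma N3: "(real k + 1) * g k 5 + g k 2 = 1"
proof -
  let ?x = "real k"
  have a: "(?x + 1) * ((?x + 2) / ((?x + 1) * (?x + 3))) = (?x + 2) / (?x + 3)" by simp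
  have b: "(?x + 2) / (?x + 3) + 1 / (?x + 3) = 1" by (simp add: add_divide_distrib[symmetric])
  show ?thesis unfolding g5 g2 a b ..
qed
lemma P3: "g k 3 + (real k + 2) * g k 2 > 1"
proof -
  let ?x = "real k"
  have a: "(?x + 2) * (1 / (?x + 3)) = 1 - 1 / (?x + 3)" by (simp add: field_simps)
  have b: "1 / (?x + 3) < 1 / (?x + 2)" by (rule divide_strict_left_mono) auto
  show ?thesis unfolding g3 g2 a using b by linarith
qed
lemma P4: "g k 4 + (real k + 1) * g k 3 > 1"
proof -
  let ?x = "real k"
  have a: "(?x + 1) * (1 / (?x + 2)) = 1 - 1 / (?x + 2)" by (simp add: field_simps)
  have h: "0 \<le> ?x ^ 2" "0 \<le> ?x" by simp_all
  have q: "0 < ?x ^ 2 + 5 * ?x + 5" using h by linarith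
  have "(?x + 3) * (?x + 2) > 1 * (?x ^ 2 + 5 * ?x + 5)" by (simp add: algebra_simps power2_eq_square)
  then have "(?x + 3) / (?x ^ 2 + 5 * ?x + 5) > 1 / (?x + 2)" using q
    by (simp add: frac_less_eq, intro divide_neg_pos) simp_all
  then show ?thesis unfolding g4 g3 a by linarith
qed
lemma P5: "g k 6 + real k * g k 5 + g k 2 > 1"
proof -
  have "g k 5 < g k 6" by (rule g_mono) simp_all
  then show ?thesis using N3[of k] by (simp add: algebra_simps)
qed

lemma rvA:
  "rhoV k (seq (replicate (k + 4) 1)) = real k + 4"
  "rhoV k (seq (replicate (k + 3) 2)) = real k + 4"
  "rhoV k (seq (replicate (k + 2) 3 @ [1])) = real k + 4"
  "rhoV k (seq (replicate (k + 1) 5 @ [2, 1])) = real k + 4"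
  using N1[of k] N2[of k] N3[of k]
  by (subst rhoV_seq; simp add: rho_g g1' sum_list_replicate algebra_simps)+

lemma rvM:
  "rhoV k (seq (replicate (k + 5) 1)) > real k + 4"
  "rhoV k (seq (2 # replicate (k + 3) 1)) > real k + 4"
  "rhoV k (seq (3 # replicate (k + 2) 2)) > real k + 4"
  "rhoV k (seq (4 # replicate (k + 1) 3 @ [1])) > real k + 4"
  "rhoV k (seq (6 # replicate k 5 @ [2, 1])) > real k + 4"
  using P3[of k] P4[of k] P5[of k] g_mono[of 1 2 k]
  by (subst rhoV_seq; simp add: rho_g g1 g1' sum_list_replicate algebra_simps)+


lemma cc_le1: "cc k \<le> 1"
proof -
  have "cc k \<le> (real k + 1) * cc k" using cc_pos[of k] by (simp add: algebra_simps)
  then show ?thesis using N5[of k] by linarith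
qed

lemma classify:
  assumes M: "\<forall>i j. i \<le> j \<longrightarrow> v j \<le> v i" and P: "\<forall>i<m. v i \<noteq> 0" and Z: "\<forall>i\<ge>m. v i = 0"
  shows "(rhoV k v = real k + 4 \<longrightarrow>
            v = seq (replicate (k + 4) 1) \<or> v = seq (replicate (k + 3) 2) \<or>
            v = seq (replicate (k + 2) 3 @ [1]) \<or> v = seq (replicate (k + 1) 5 @ [2, 1])) \<and>
         (rhoV k v > real k + 4 \<longrightarrow>
            seq (replicate (k + 5) 1) \<le> v \<or> seq (2 # replicate (k + 3) 1) \<le> v \<or>
            seq (3 # replicate (k + 2) 2) \<le> v \<or> seq (4 # replicate (k + 1) 3 @ [1]) \<le> v \<or>
            seq (6 # replicate k 5 @ [2, 1]) \<le> v)"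
proof -
  have vge: "\<And>i j. i \<le> j \<Longrightarrow> v j \<le> v i" using M by blast
  have pos: "\<And>i. i < m \<Longrightarrow> 1 \<le> v i" using P by (simp add: Suc_le_eq)
  have z: "\<And>i. m \<le> i \<Longrightarrow> v i = 0" using Z by blast
  have R: "rhoV k v = real m + (\<Sum>i<m. g k (v i))" by (rule rhoV_m[OF P Z])
  have Snn: "(\<Sum>i<m. g k (v i)) \<ge> 0" using sum_lb[of m 1 v k] pos by (simp add: g1 g1')
  consider "m \<le> k + 2" | "m \<ge> k + 5" | "m = k + 4" | "m = k + 3" by linarith
  then show ?thesis
  proof cases
    case 1
    have "rhoV k v < real k + 4"
    proof (cases "m = 0")
      case True then show ?thesis using R by simp
    next
      case False
      have a: "(\<Sum>i<m. g k (v i)) < real m * cc k" using False sum_ub_strict by simp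
      have b: "real m * cc k \<le> (real k + 2) * cc k" using 1 cc_pos[of k]
        by (intro mult_right_mono) simp_all
      have c: "(real k + 2) * cc k \<le> 2" using N5[of k] cc_le1[of k] by (simp add: algebra_simps)
      have "real m \<le> real k + 2" using 1 by simp
      then show ?thesis using R a b c by linarith
    qed
    then show ?thesis by simp
  next
    case 2
    have "rhoV k v \<ge> real k + 5" using R Snn 2 by simp
    moreover have "seq (replicate (k + 5) 1) \<le> v"
      by (rule le_funI, unfold sM1) (use P 2 in \<open>auto simp: Suc_le_eq\<close>)
    ultimately show ?thesis by simp
  next
    case 3
    show ?thesis
    proof (cases "v 0 = 1")
      case True
      have "v = seq (replicate (k + 4) 1)"
      proof (rule ext)
        fix i show "v i = seq (replicate (k + 4) 1) i"
          unfolding sA1 using vge[of 0 i] pos[of i] z[of i] True 3 by auto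
      qed
      then show ?thesis using rvA(1)[of k] by simp
    next
      case False
      then have "1 < v 0" using pos[of 0] 3 by simp
      then have "real m * g k 1 < (\<Sum>i<m. g k (v i))"
        using pos 3 by (intro sum_lb_strict) auto
      then have "rhoV k v > real k + 4" using R 3 by (simp add: g1 g1')
      moreover have "seq (2 # replicate (k + 3) 1) \<le> v"
        by (rule le_funI, unfold sM2) (use pos 3 \<open>1 < v 0\<close> in auto)
      ultimately show ?thesis by simp
    qed
  next
    case 4
    have S1: "(\<Sum>i<m. g k (v i)) = (\<Sum>i<k+2. g k (v i)) + g k (v (k+2))"
    proof -
      have e: "m = Suc (k+2)" using 4 by simp
      show ?thesis by (simp only: e sum_split)
    qed
    have rm: "real m = real k + 3" using 4 by simp
    have S2: "(\<Sum>i<k+2. g k (v i)) = (\<Sum>i<k+1. g k (v i)) + g k (v (k+1))"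
    proof -
      have e: "k + 2 = Suc (k+1)" by simp
      show ?thesis by (simp only: e sum_split)
    qed
    have S3: "(\<Sum>i<k+1. g k (v i)) = (\<Sum>i<k. g k (v i)) + g k (v k)"
    proof -
      have e: "k + 1 = Suc k" by simp
      show ?thesis by (simp only: e sum_split)
    qed
    show ?thesis
    proof (cases "v (k+2) \<ge> 2")
      case True
      have all2: "\<forall>i<m. 2 \<le> v i"
      proof (intro allI impI)
        fix i assume "i < m" then have "i \<le> k + 2" using 4 by simp
        then show "2 \<le> v i" using vge[of i "k+2"] True by simp
      qed
      show ?thesis
      proof (cases "v 0 = 2")
        case True
        have "v = seq (replicate (k + 3) 2)"
        proof (rule ext)
          fix i show "v i = seq (replicate (k + 3) 2) i"
            unfolding sA2 using vge[of 0 i] all2 z[of i] True 4 by auto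
        qed
        then show ?thesis using rvA(2)[of k] by simp
      next
        case False
        then have "2 < v 0" using all2[rule_format, of 0] 4 by simp
        then have "real m * g k 2 < (\<Sum>i<m. g k (v i))"
          using all2 4 by (intro sum_lb_strict) auto
        moreover have "real m * g k 2 = 1" using 4 N1[of k] by simp
        ultimately have "rhoV k v > real k + 4" using R rm by linarith
        moreover have "seq (3 # replicate (k + 2) 2) \<le> v"
          by (rule le_funI, unfold sM3) (use all2 4 \<open>2 < v 0\<close> in auto)
        ultimately show ?thesis by simp
      qed
    next
      case False
      then have v2: "v (k+2) = 1" using pos[of "k+2"] 4 by simp
      then have T: "(\<Sum>i<m. g k (v i)) = (\<Sum>i<k+2. g k (v i))" using S1 g1[of k] by simp
      consider "v (k+1) = 1" | "v (k+1) \<ge> 3" | "v (k+1) = 2" using pos[of "k+1"] 4 by linarith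
      then show ?thesis
      proof cases
        case 1
        have "(\<Sum>i<k+1. g k (v i)) < (real k + 1) * cc k" using sum_ub_strict[of "k+1" k v] by (simp add: algebra_simps)
        moreover have "g k (v (k+1)) = 0" using 1 g1[of k] by simp
        ultimately have "rhoV k v < real k + 4" using R T S2 N5[of k] rm by linarith
        then show ?thesis by simp
      next
        case 2
        have all3: "\<forall>i<k+2. 3 \<le> v i"
        proof (intro allI impI)
          fix i assume "i < k + 2" then have "i \<le> k + 1" by simp
          then show "3 \<le> v i" using vge[of i "k+1"] 2 by simp
        qed
        show ?thesis
        proof (cases "v 0 = 3")
          case True
          have "v = seq (replicate (k + 2) 3 @ [1])"
          proof (rule ext)
            fix i show "v i = seq (replicate (k + 2) 3 @ [1]) i"
              unfolding sA3 using vge[of 0 i] all3 z[of i] True 4 v2 by auto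
          qed
          then show ?thesis using rvA(3)[of k] by simp
        next
          case False
          then have "3 < v 0" using all3[rule_format, of 0] by simp
          then have "real (k+2) * g k 3 < (\<Sum>i<k+2. g k (v i))"
            using all3 by (intro sum_lb_strict) auto
          moreover have "real (k+2) * g k 3 = 1" using N2[of k] by (simp add: add.commute)
          ultimately have "rhoV k v > real k + 4" using R T rm by linarith
          moreover have "seq (4 # replicate (k + 1) 3 @ [1]) \<le> v"
            by (rule le_funI, unfold sM4) (use all3 4 pos \<open>3 < v 0\<close> in auto)
          ultimately show ?thesis by simp
        qed
      next
        case 3
        show ?thesis
        proof (cases "v k \<le> 4")
          case True
          have a: "(\<Sum>i<k. g k (v i)) \<le> real k * cc k" by (rule sum_ub)
          have b: "g k (v k) \<le> g k 4" using True pos[of k] 4 by (intro g_mono_le) simp_all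
          have c: "g k (v (k+1)) = g k 2" using 3 by simp
          have "rhoV k v < real k + 4" using R T S2 S3 a b c N4[of k] rm by linarith
          then show ?thesis by simp
        next
          case False
          have all5: "\<forall>i<k+1. 5 \<le> v i"
          proof (intro allI impI)
            fix i assume "i < k + 1" then have "i \<le> k" by simp
            then show "5 \<le> v i" using vge[of i k] False by simp
          qed
          show ?thesis
          proof (cases "v 0 = 5")
            case True
            have "v = seq (replicate (k + 1) 5 @ [2, 1])"
            proof (rule ext)
              fix i show "v i = seq (replicate (k + 1) 5 @ [2, 1]) i"
                unfolding sA4 using vge[of 0 i] all5 z[of i] True 4 v2 3 by auto
            qed
            then show ?thesis using rvA(4)[of k] by simp
          next
            case False
            then have "5 < v 0" using all5[rule_format, of 0] by simp
            then have "real (k+1) * g k 5 < (\<Sum>i<k+1. g k (v i))"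
              using all5 by (intro sum_lb_strict) auto
            moreover have c: "g k (v (k+1)) = g k 2" using 3 by simp
            moreover have "real (k+1) * g k 5 = 1 - g k 2" using N3[of k] by (simp add: add.commute)
            ultimately have "rhoV k v > real k + 4" using R T S2 rm by linarith
            moreover have "seq (6 # replicate k 5 @ [2, 1]) \<le> v"
              by (rule le_funI, unfold sM5) (use all5 4 pos 3 \<open>5 < v 0\<close> in auto)
            ultimately show ?thesis by simp
          qed
        qed
      qed
    qed
  qed
qed


definition fA1 :: "nat \<Rightarrow> nat \<Rightarrow> nat" where "fA1 k = (\<lambda>i. if i < k + 4 then 1 else 0)"
definition fA2 :: "nat \<Rightarrow> nat \<Rightarrow> nat" where "fA2 k = (\<lambda>i. if i < k + 3 then 2 else 0)"
definition fA3 :: "nat \<Rightarrow> nat \<Rightarrow> nat" where "fA3 k = (\<lambda>i. if i < k + 2 then 3 else if i = k + 2 then 1 else 0)"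
definition fA4 :: "nat \<Rightarrow> nat \<Rightarrow> nat" where "fA4 k = (\<lambda>i. if i < k + 1 then 5 else if i = k + 1 then 2 else if i = k + 2 then 1 else 0)"
definition fM1 :: "nat \<Rightarrow> nat \<Rightarrow> nat" where "fM1 k = (\<lambda>i. if i < k + 5 then 1 else 0)"
definition fM2 :: "nat \<Rightarrow> nat \<Rightarrow> nat" where "fM2 k = (\<lambda>i. if i = 0 then 2 else if i < k + 4 then 1 else 0)"
definition fM3 :: "nat \<Rightarrow> nat \<Rightarrow> nat" where "fM3 k = (\<lambda>i. if i = 0 then 3 else if i < k + 3 then 2 else 0)"
definition fM4 :: "nat \<Rightarrow> nat \<Rightarrow> nat" where "fM4 k = (\<lambda>i. if i = 0 then 4 else if i < k + 2 then 3 else if i = k + 2 then 1 else 0)"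
definition fM5 :: "nat \<Rightarrow> nat \<Rightarrow> nat" where "fM5 k = (\<lambda>i. if i = 0 then 6 else if i < k + 1 then 5 else if i = k + 1 then 2 else if i = k + 2 then 1 else 0)"

lemma eqs:
  "seq (replicate (k + 4) 1) = fA1 k" "seq (replicate (k + 3) 2) = fA2 k"
  "seq (replicate (k + 2) 3 @ [1]) = fA3 k" "seq (replicate (k + 1) 5 @ [2, 1]) = fA4 k"
  "seq (replicate (k + 5) 1) = fM1 k" "seq (2 # replicate (k + 3) 1) = fM2 k"
  "seq (3 # replicate (k + 2) 2) = fM3 k" "seq (4 # replicate (k + 1) 3 @ [1]) = fM4 k"
  "seq (6 # replicate k 5 @ [2, 1]) = fM5 k"
  unfolding fA1_def fA2_def fA3_def fA4_def fM1_def fM2_def fM3_def fM4_def fM5_def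
  by (rule ext, rule sforms)+

lemma noless:
  assumes "x \<in> {fM1 k, fM2 k, fM3 k, fM4 k, fM5 k}" "y \<in> {fM1 k, fM2 k, fM3 k, fM4 k, fM5 k}"
  shows "\<not> x < y"
proof
  assume xy: "x < y"
  then have le: "x \<le> y" and ne: "x \<noteq> y" by auto
  have "x 0 \<le> y 0" "x (k+1) \<le> y (k+1)" "x (k+2) \<le> y (k+2)" "x (k+3) \<le> y (k+3)" "x (k+4) \<le> y (k+4)"
    using le by (auto simp: le_fun_def)
  then show False using assms ne
    unfolding fM1_def fM2_def fM3_def fM4_def fM5_def by auto
qed

lemma AM: "fA1 k < fM1 k" "fA1 k < fM2 k" "fA2 k < fM3 k" "fA3 k < fM4 k" "fA4 k < fM5 k"
proof -
  have n: "fA1 k \<noteq> fM1 k" "fA1 k \<noteq> fM2 k" "fA2 k \<noteq> fM3 k" "fA3 k \<noteq> fM4 k" "fA4 k \<noteq> fM5 k"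
  proof -
    show "fA1 k \<noteq> fM1 k" proof assume "fA1 k = fM1 k" then have "fA1 k (k+4) = fM1 k (k+4)" by simp
      then show False by (simp add: fA1_def fM1_def) qed
    show "fA1 k \<noteq> fM2 k" proof assume "fA1 k = fM2 k" then have "fA1 k 0 = fM2 k 0" by simp
      then show False by (simp add: fA1_def fM2_def) qed
    show "fA2 k \<noteq> fM3 k" proof assume "fA2 k = fM3 k" then have "fA2 k 0 = fM3 k 0" by simp
      then show False by (simp add: fA2_def fM3_def) qed
    show "fA3 k \<noteq> fM4 k" proof assume "fA3 k = fM4 k" then have "fA3 k 0 = fM4 k 0" by simp
      then show False by (simp add: fA3_def fM4_def) qed
    show "fA4 k \<noteq> fM5 k" proof assume "fA4 k = fM5 k" then have "fA4 k 0 = fM5 k 0" by simp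
      then show False by (simp add: fA4_def fM5_def) qed
  qed
  have l: "fA1 k \<le> fM1 k" "fA1 k \<le> fM2 k" "fA2 k \<le> fM3 k" "fA3 k \<le> fM4 k" "fA4 k \<le> fM5 k"
    unfolding fA1_def fA2_def fA3_def fA4_def fM1_def fM2_def fM3_def fM4_def fM5_def le_fun_def
    by auto
  show "fA1 k < fM1 k" "fA1 k < fM2 k" "fA2 k < fM3 k" "fA3 k < fM4 k" "fA4 k < fM5 k"
    using n l by (auto simp: less_le)
qed

theorem proposition3:
  fixes k :: nat
  shows "({v \<in> Vt. rhoV k v = real k + 4} =
           {seq (replicate (k + 4) 1),
            seq (replicate (k + 3) 2),
            seq (replicate (k + 2) 3 @ [1]),
            seq (replicate (k + 1) 5 @ [2, 1])}) \<and>
         (minimal_elements {v \<in> Vt. rhoV k v > real k + 4} =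
           {seq (replicate (k + 5) 1),
            seq (2 # replicate (k + 3) 1),
            seq (3 # replicate (k + 2) 2),
            seq (4 # replicate (k + 1) 3 @ [1]),
            seq (6 # replicate k 5 @ [2, 1])}) \<and>
         (\<forall>w\<in>Vt. rhoV k w > real k + 4 \<longrightarrow>
           (\<exists>v\<in>Vt. v < w \<and> rhoV k v = real k + 4))"
proof -
  have C: "(rhoV k v = real k + 4 \<longrightarrow> v = fA1 k \<or> v = fA2 k \<or> v = fA3 k \<or> v = fA4 k) \<and>
           (rhoV k v > real k + 4 \<longrightarrow> fM1 k \<le> v \<or> fM2 k \<le> v \<or> fM3 k \<le> v \<or> fM4 k \<le> v \<or> fM5 k \<le> v)"
    if vV: "v \<in> Vt" for v
  proof -
    obtain m where P: "\<forall>i<m. v i \<noteq> 0" and Z: "\<forall>i\<ge>m. v i = 0" using Vt_m[OF vV] by blast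
    have M: "\<forall>i j. i \<le> j \<longrightarrow> v j \<le> v i" using vV unfolding Vt_def by blast
    show ?thesis using classify[OF M P Z, of k] unfolding eqs .
  qed
  have V: "fA1 k \<in> Vt" "fA2 k \<in> Vt" "fA3 k \<in> Vt" "fA4 k \<in> Vt"
     "fM1 k \<in> Vt" "fM2 k \<in> Vt" "fM3 k \<in> Vt" "fM4 k \<in> Vt" "fM5 k \<in> Vt"
    using inVt[of k] unfolding eqs by blast+
  have RA: "rhoV k (fA1 k) = real k + 4" "rhoV k (fA2 k) = real k + 4"
     "rhoV k (fA3 k) = real k + 4" "rhoV k (fA4 k) = real k + 4"
    using rvA[of k] unfolding eqs by blast+
  have RM: "rhoV k (fM1 k) > real k + 4" "rhoV k (fM2 k) > real k + 4" "rhoV k (fM3 k) > real k + 4"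
     "rhoV k (fM4 k) > real k + 4" "rhoV k (fM5 k) > real k + 4"
    using rvM[of k] unfolding eqs by blast+
  let ?MS = "{fM1 k, fM2 k, fM3 k, fM4 k, fM5 k}"
  have dom: "\<exists>x\<in>?MS. x \<le> w" if "w \<in> Vt" "rhoV k w > real k + 4" for w
    using C[OF that(1)] that(2) by auto
  have partA: "{v \<in> Vt. rhoV k v = real k + 4} = {fA1 k, fA2 k, fA3 k, fA4 k}"
    using C V RA by auto
  have MS_sub: "?MS \<subseteq> {v \<in> Vt. rhoV k v > real k + 4}" using V RM by auto
  have partB: "minimal_elements {v \<in> Vt. rhoV k v > real k + 4} = ?MS"
  proof
    show "minimal_elements {v \<in> Vt. rhoV k v > real k + 4} \<subseteq> ?MS"
    proof
      fix v assume "v \<in> minimal_elements {v \<in> Vt. rhoV k v > real k + 4}"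
      then have v: "v \<in> Vt" "rhoV k v > real k + 4"
        and nm: "\<not> (\<exists>w\<in>{v \<in> Vt. rhoV k v > real k + 4}. w < v)"
        unfolding minimal_elements_def by auto
      obtain x where x: "x \<in> ?MS" "x \<le> v" using dom[OF v] by blast
      have "x \<in> {v \<in> Vt. rhoV k v > real k + 4}" using x(1) MS_sub by blast
      then have "\<not> x < v" using nm by blast
      then have "x = v" using x(2) by (simp add: less_le)
      then show "v \<in> ?MS" using x(1) by simp
    qed
  next
    show "?MS \<subseteq> minimal_elements {v \<in> Vt. rhoV k v > real k + 4}"
    proof
      fix y assume y: "y \<in> ?MS"
      have "\<not> (\<exists>w\<in>{v \<in> Vt. rhoV k v > real k + 4}. w < y)"
      proof
        assume "\<exists>w\<in>{v \<in> Vt. rhoV k v > real k + 4}. w < y"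
        then obtain w where w: "w \<in> Vt" "rhoV k w > real k + 4" "w < y" by blast
        obtain x where x: "x \<in> ?MS" "x \<le> w" using dom[OF w(1,2)] by blast
        have "x < y" using x(2) w(3) by (rule le_less_trans)
        then show False using noless[OF x(1) y] by simp
      qed
      then show "y \<in> minimal_elements {v \<in> Vt. rhoV k v > real k + 4}"
        using y MS_sub unfolding minimal_elements_def by blast
    qed
  qed
  have partC: "\<forall>w\<in>Vt. rhoV k w > real k + 4 \<longrightarrow> (\<exists>v\<in>Vt. v < w \<and> rhoV k v = real k + 4)"
  proof (intro ballI impI)
    fix w assume w: "w \<in> Vt" "rhoV k w > real k + 4"
    obtain x where x: "x \<in> ?MS" "x \<le> w" using dom[OF w] by blast
    have "\<exists>a\<in>{fA1 k, fA2 k, fA3 k, fA4 k}. a < x" using x(1) AM by auto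
    then obtain a where a: "a \<in> {fA1 k, fA2 k, fA3 k, fA4 k}" "a < x" by blast
    have "a < w" using a(2) x(2) by (rule less_le_trans)
    moreover have "a \<in> Vt" "rhoV k a = real k + 4" using a(1) V RA by auto
    ultimately show "\<exists>v\<in>Vt. v < w \<and> rhoV k v = real k + 4" by blast
  qed
  show ?thesis unfolding eqs using partA partB partC by blast
qed

end
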